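(* Let $\tau\in(0,1]$ and let $\underline{q}^*$ be the optimal lower $\tau$-quantile. Any policy $\pi^*$ such that $F^{\pi^*}(\mathrm{prec}(\underline{q}^* )) = F^*(\mathrm{prec}(\underline{q}^* ))$, where $F^*(w)=\min_\pi F^\pi(w)$, is an optimal policy with regard to the lower $\tau$-quantile criterion.
   Context: An MDP is a tuple $(\mathcal S,\mathcal A,\mathcal P,r,s_0)$ with finite state set, finite action set, transition probabilities $\mathcal P(s,a,s')$, reward function $r:\mathcal S\times\mathcal A\to\mathcal R$, initial state $s_0$, and finite horizon $T$; policies are sequences of $T$ (possibly history-dependent, randomized) decision rules. The wealth of a history is $w(h_0)=w_0$, $w(h_t)=w(h_{t-1})\circ r(s_{t-1},a_{t-1})$ for a binary operation $\circ$ with left identity $w_0$. The set $\mathcal W_T$ of wealth levels of $T$-histories is totally ordered by $\preceq_{\mathcal W}$ with least element $\min(\mathcal W_T)$ and greatest element. For a policy $\pi$, $p^\pi(w)$ is the probability that the generated $T$-history has wealth $w$, and $F^\pi(w)=\sum_{w'\preceq_{\mathcal W}w}p^\pi(w')$. The lower $\tau$-quantile of $\pi$ is $\underline{q}^\pi_\tau=\min\{w\in\mathcal W_T:F^\pi(w)\ge\tau\}$; $\underline{q}^*=\max_\pi\underline{q}^\pi_\tau$, and a policy is optimal for the lower $\tau$-quantile criterion if its lower $\tau$-quantile equals $\underline{q}^*$. For $w\in\mathcal W_T$, $\mathrm{prec}(w)$ is the greatest (w.r.t. $\preceq_{\mathcal W}$) element of $\mathcal W_T$ strictly below $w$, and $\mathrm{prec}(w)=w$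 if no such element exists. *)

theory Defs
  imports "HOL-Probability.Probability"
begin

text \<open>
  Finite-horizon MDP with finite state type 's and finite action type 'a.  Wealth values live in a linearly ordered type 'w, combined by the binary
  operation op with left identity w0.
  A history h_t = (s_0,a_0,...,s_{t-1},a_{t-1},s_t) is represented as the list of
  state/action pairs together with the current state.
  A policy is a sequence of (history-dependent, randomized) decision rules:
  the decision rule at time t maps a t-history to a distribution over actions.
\<close>

type_synonym ('s, 'a) hist = "('s \<times> 'a) list \<times> 's"
type_synonym ('s, 'a) policy = "nat \<Rightarrow> ('s, 'a) hist \<Rightarrow> 'a pmf"

fun hist_dist ::
  "('s \<Rightarrow> 'a \<Rightarrow> 's pmf) \<Rightarrow> 's \<Rightarrow> ('s, 'a) policy \<Rightarrow> nat \<Rightarrow> ('s, 'a) hist pmf" where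
  "hist_dist P s0 pol 0 = return_pmf ([], s0)"
| "hist_dist P s0 pol (Suc t) =
     bind_pmf (hist_dist P s0 pol t) (\<lambda>(xs, s).
       bind_pmf (pol t (xs, s)) (\<lambda>a.
         map_pmf (\<lambda>s'. (xs @ [(s, a)], s')) (P s a)))"

definition wealth ::
  "('w \<Rightarrow> 'w \<Rightarrow> 'w) \<Rightarrow> 'w \<Rightarrow> ('s \<Rightarrow> 'a \<Rightarrow> 'w) \<Rightarrow> ('s, 'a) hist \<Rightarrow> 'w" where
  "wealth op w0 r h = foldl (\<lambda>w (s, a). op w (r s a)) w0 (fst h)"

definition wealth_levels ::
  "('w \<Rightarrow> 'w \<Rightarrow> 'w) \<Rightarrow> 'w \<Rightarrow> ('s \<Rightarrow> 'a \<Rightarrow> 'w) \<Rightarrow> nat \<Rightarrow> 'w set" where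
  "wealth_levels op w0 r T = {wealth op w0 r h | h. length (fst h) = T}"

definition wealth_prob ::
  "('s \<Rightarrow> 'a \<Rightarrow> 's pmf) \<Rightarrow> 's \<Rightarrow> ('w \<Rightarrow> 'w \<Rightarrow> 'w) \<Rightarrow> 'w \<Rightarrow> ('s \<Rightarrow> 'a \<Rightarrow> 'w) \<Rightarrow> nat
    \<Rightarrow> ('s, 'a) policy \<Rightarrow> 'w \<Rightarrow> real" where
  "wealth_prob P s0 op w0 r T pol w = pmf (map_pmf (wealth op w0 r) (hist_dist P s0 pol T)) w"

definition wealth_cdf ::
  "('s \<Rightarrow> 'a \<Rightarrow> 's pmf) \<Rightarrow> 's \<Rightarrow> ('w::linorder \<Rightarrow> 'w \<Rightarrow> 'w) \<Rightarrow> 'w \<Rightarrow> ('s \<Rightarrow> 'a \<Rightarrow> 'w) \<Rightarrow> nat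
    \<Rightarrow> ('s, 'a) policy \<Rightarrow> 'w \<Rightarrow> real" where
  "wealth_cdf P s0 op w0 r T pol w =
     (\<Sum>w' \<in> {w' \<in> wealth_levels op w0 r T. w' \<le> w}. wealth_prob P s0 op w0 r T pol w')"

definition lower_quantile ::
  "('s \<Rightarrow> 'a \<Rightarrow> 's pmf) \<Rightarrow> 's \<Rightarrow> ('w::linorder \<Rightarrow> 'w \<Rightarrow> 'w) \<Rightarrow> 'w \<Rightarrow> ('s \<Rightarrow> 'a \<Rightarrow> 'w) \<Rightarrow> nat
    \<Rightarrow> real \<Rightarrow> ('s, 'a) policy \<Rightarrow> 'w" where
  "lower_quantile P s0 op w0 r T tau pol =
     Min {w \<in> wealth_levels op w0 r T. wealth_cdf P s0 op w0 r T pol w \<ge> tau}"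

definition opt_lower_quantile ::
  "('s \<Rightarrow> 'a \<Rightarrow> 's pmf) \<Rightarrow> 's \<Rightarrow> ('w::linorder \<Rightarrow> 'w \<Rightarrow> 'w) \<Rightarrow> 'w \<Rightarrow> ('s \<Rightarrow> 'a \<Rightarrow> 'w) \<Rightarrow> nat
    \<Rightarrow> real \<Rightarrow> 'w" where
  "opt_lower_quantile P s0 op w0 r T tau =
     Max (range (\<lambda>pol. lower_quantile P s0 op w0 r T tau pol))"

definition opt_cdf ::
  "('s \<Rightarrow> 'a \<Rightarrow> 's pmf) \<Rightarrow> 's \<Rightarrow> ('w::linorder \<Rightarrow> 'w \<Rightarrow> 'w) \<Rightarrow> 'w \<Rightarrow> ('s \<Rightarrow> 'a \<Rightarrow> 'w) \<Rightarrow> nat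
    \<Rightarrow> 'w \<Rightarrow> real" where
  "opt_cdf P s0 op w0 r T w = (INF pol. wealth_cdf P s0 op w0 r T pol w)"

definition prec :: "'w::linorder set \<Rightarrow> 'w \<Rightarrow> 'w" where
  "prec W w = (if \<exists>w' \<in> W. w' < w then Max {w' \<in> W. w' < w} else w)"

end

theory Submission
  imports Defs
begin

lemma hist_len:
  "h \<in> set_pmf (hist_dist P s0 pol t) \<Longrightarrow> length (fst h) = t"
  by (induction t arbitrary: h) (auto split: prod.splits)

lemma finite_levels:
  "finite (wealth_levels op w0 (r :: 's::finite \<Rightarrow> 'a::finite \<Rightarrow> 'w) T)"
proof -
  have "wealth_levels op w0 r T = wealth op w0 r ` ({xs. length xs = T} \<times> UNIV)"
    unfolding wealth_levels_def by force
  moreover have "finite ({xs :: ('s \<times> 'a) list. length xs = T} \<times> (UNIV :: 's set))"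
    using finite_lists_length_eq[of "UNIV :: ('s \<times> 'a) set"] by simp
  ultimately show ?thesis by simp
qed

lemma levels_ne: "wealth_levels op w0 r T \<noteq> {}"
proof -
  have "wealth op w0 r (replicate T undefined, undefined) \<in> wealth_levels op w0 r T"
    unfolding wealth_levels_def by (rule CollectI, rule exI[of _ "(replicate T undefined, undefined)"]) simp
  thus ?thesis by auto
qed

lemma cdf_nonneg: "0 \<le> wealth_cdf P s0 op w0 r T pol w"
  unfolding wealth_cdf_def wealth_prob_def by (simp add: sum_nonneg)

lemma cdf_mono:
  fixes r :: "'s::finite \<Rightarrow> 'a::finite \<Rightarrow> 'w::linorder"
  assumes "w \<le> v"
  shows "wealth_cdf P s0 op w0 r T pol w \<le> wealth_cdf P s0 op w0 r T pol v"
  unfolding wealth_cdf_def wealth_prob_def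
  apply (rule sum_mono2)
  using finite_levels[of op w0 r T] assms by auto

lemma cdf_max:
  fixes r :: "'s::finite \<Rightarrow> 'a::finite \<Rightarrow> 'w::linorder"
  shows "wealth_cdf P s0 op w0 r T pol (Max (wealth_levels op w0 r T)) = 1"
proof -
  let ?W = "wealth_levels op w0 r T"
  have f: "finite ?W" by (rule finite_levels)
  have "{w' \<in> ?W. w' \<le> Max ?W} = ?W" using f by auto
  moreover have "set_pmf (map_pmf (wealth op w0 r) (hist_dist P s0 pol T)) \<subseteq> ?W"
    using hist_len unfolding wealth_levels_def by fastforce
  ultimately show ?thesis unfolding wealth_cdf_def wealth_prob_def
    using sum_pmf_eq_1[OF f] by simp
qed

lemma quantile_props:
  fixes r :: "'s::finite \<Rightarrow> 'a::finite \<Rightarrow> 'w::linorder"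
  assumes "tau \<le> 1"
  shows "finite {w \<in> wealth_levels op w0 r T. wealth_cdf P s0 op w0 r T pol w \<ge> tau}"
    "{w \<in> wealth_levels op w0 r T. wealth_cdf P s0 op w0 r T pol w \<ge> tau} \<noteq> {}"
    "lower_quantile P s0 op w0 r T tau pol = Min {w \<in> wealth_levels op w0 r T. wealth_cdf P s0 op w0 r T pol w \<ge> tau}"
    "lower_quantile P s0 op w0 r T tau pol \<in> wealth_levels op w0 r T"
proof -
  let ?W = "wealth_levels op w0 r T"
  define S where "S = {w \<in> wealth_levels op w0 r T. wealth_cdf P s0 op w0 r T pol w \<ge> tau}"
  have fS: "finite S" unfolding S_def using finite_levels[of op w0 r T] by simp
  have "Max ?W \<in> S" unfolding S_def using cdf_max[of P s0 op w0 r T pol] assms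
      Max_in[OF finite_levels levels_ne] by simp
  hence ne: "S \<noteq> {}" by auto
  have lq: "lower_quantile P s0 op w0 r T tau pol = Min S" unfolding lower_quantile_def S_def ..
  show "finite {w \<in> wealth_levels op w0 r T. wealth_cdf P s0 op w0 r T pol w \<ge> tau}" using fS S_def by simp
  show "{w \<in> wealth_levels op w0 r T. wealth_cdf P s0 op w0 r T pol w \<ge> tau} \<noteq> {}" using ne S_def by simp
  show "lower_quantile P s0 op w0 r T tau pol = Min {w \<in> wealth_levels op w0 r T. wealth_cdf P s0 op w0 r T pol w \<ge> tau}" using lq S_def by simp
  from lq show "lower_quantile P s0 op w0 r T tau pol \<in> ?W" using Min_in[OF fS ne] unfolding S_def by auto
qed

theorem lemma3:
  fixes P :: "'s::finite \<Rightarrow> 'a::finite \<Rightarrow> 's pmf"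
    and s0 :: 's
    and op :: "'w::linorder \<Rightarrow> 'w \<Rightarrow> 'w"
    and w0 :: 'w
    and r :: "'s \<Rightarrow> 'a \<Rightarrow> 'w"
    and T :: nat
    and tau :: real
    and pistar :: "('s, 'a) policy"
  assumes left_id: "\<forall>x. op w0 x = x"
    and tau_pos: "0 < tau" and tau_le: "tau \<le> 1"
    and hyp: "wealth_cdf P s0 op w0 r T pistar
                (prec (wealth_levels op w0 r T) (opt_lower_quantile P s0 op w0 r T tau))
              = opt_cdf P s0 op w0 r T
                (prec (wealth_levels op w0 r T) (opt_lower_quantile P s0 op w0 r T tau))"
  shows "lower_quantile P s0 op w0 r T tau pistar = opt_lower_quantile P s0 op w0 r T tau"
proof -
  let ?W = "wealth_levels op w0 r T"
  let ?lq = "\<lambda>pol. lower_quantile P s0 op w0 r T tau pol"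
  let ?F = "\<lambda>pol. wealth_cdf P s0 op w0 r T pol"
  define q where "q = opt_lower_quantile P s0 op w0 r T tau"
  have rsub: "range ?lq \<subseteq> ?W" using quantile_props(4)[OF tau_le] by blast
  have fr: "finite (range ?lq)" using finite_subset[OF rsub finite_levels] .
  have qmax: "q = Max (range ?lq)" unfolding q_def opt_lower_quantile_def ..
  have "q \<in> range ?lq" unfolding qmax using Max_in[OF fr] by auto
  then obtain pol0 where pol0: "q = ?lq pol0" by auto
  have le: "?lq pistar \<le> q" unfolding qmax using Max_ge[OF fr] by auto
  have ge: "q \<le> ?lq pistar"
  proof (cases "\<exists>w'\<in>?W. w' < q")
    case False
    moreover have "?lq pistar \<in> ?W" by (rule quantile_props(4)[OF tau_le])
    ultimately show ?thesis by (simp add: not_less)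
  next
    case True
    define p where "p = Max {w' \<in> ?W. w' < q}"
    have fp: "finite {w' \<in> ?W. w' < q}" using finite_levels[of op w0 r T] by simp
    have pin: "p \<in> ?W" "p < q" unfolding p_def using Max_in[OF fp] True by auto
    have precq: "prec ?W q = p" unfolding prec_def p_def using True by simp
    have "?F pol0 p < tau"
    proof (rule ccontr)
      assume "\<not> ?F pol0 p < tau"
      hence "p \<in> {w \<in> ?W. ?F pol0 w \<ge> tau}" using pin by simp
      hence "Min {w \<in> ?W. ?F pol0 w \<ge> tau} \<le> p"
        by (rule Min_le[OF quantile_props(1)[OF tau_le]])
      hence "?lq pol0 \<le> p" by (simp only: quantile_props(3)[OF tau_le])
      thus False using pol0 pin by simp
    qed
    moreover have "?F pistar p \<le> ?F pol0 p"
    proof -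
      have "?F pistar p = (INF pol. ?F pol p)" using hyp precq unfolding q_def opt_cdf_def by simp
      also have "\<dots> \<le> ?F pol0 p"
        by (rule cINF_lower) (auto intro: bdd_belowI[of _ 0] simp: cdf_nonneg)
      finally show ?thesis .
    qed
    ultimately have Fp: "?F pistar p < tau" by simp
    show ?thesis
    proof (rule ccontr)
      assume "\<not> q \<le> ?lq pistar"
      hence lt: "?lq pistar < q" by simp
      have m0: "Min {w \<in> ?W. ?F pistar w \<ge> tau} \<in> {w \<in> ?W. ?F pistar w \<ge> tau}"
        by (rule Min_in[OF quantile_props(1,2)[OF tau_le]])
      have m: "?lq pistar \<in> {w \<in> ?W. ?F pistar w \<ge> tau}"
        using m0 by (simp only: quantile_props(3)[OF tau_le])
      hence "?lq pistar \<in> {w' \<in> ?W. w' < q}" using lt by simp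
      hence "?lq pistar \<le> p" unfolding p_def by (rule Max_ge[OF fp])
      hence "?F pistar (?lq pistar) \<le> ?F pistar p" by (rule cdf_mono)
      thus False using m Fp by simp
    qed
  qed
  show ?thesis using le ge q_def by simp
qed

end
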